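(* Let an LTI system be BIBO stable with impulse response $h(t)$ and strictly proper rational transfer function $H(s)=\mathcal L[h(t)]$ of minimal order $m$, with unit DC gain, i.e. $H(0)=\int_0^\infty h(t)dt=1$. Then the system can be represented by a triple $(\Pi,\eta,\alpha)$ with $\Pi\in\mathbb R^{m\times m}$ Hurwitz, $\eta=-\Pi\mathbf 1_m\in\mathbb R^m$ and $\alpha=[1,0,\dots,0]^\top\in\mathbb R^m$, in the sense that $H(s)=\alpha^\top(sI-\Pi)^{-1}\eta$; the impulse response is $h(t)=\alpha^\top\exp(\Pi t)\eta$ and the step response is $\int_0^th(\tau)d\tau=1-\alpha^\top\exp(\Pi t)\mathbf 1_m$ for $t\ge0$.
   Context: $\mathbf 1_m$ denotes the all-ones column vector in $\mathbb R^m$; $\mathcal L$ denotes the Laplace transform. A matrix is Hurwitz if all its eigenvalues have negative real part. *)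

theory Defs
  imports "HOL-Analysis.Analysis" "HOL-Computational_Algebra.Polynomial"
begin

primrec mat_pow :: "'a::comm_ring_1 ^'n^'n \<Rightarrow> nat \<Rightarrow> 'a^'n^'n" where
  "mat_pow A 0 = mat 1"
| "mat_pow A (Suc k) = A ** mat_pow A k"

definition mat_exp :: "real^'n^'n \<Rightarrow> real^'n^'n" where
  "mat_exp A = (\<Sum>k. (1 / fact k) *\<^sub>R mat_pow A k)"

definition cmat :: "real^'n^'m \<Rightarrow> complex^'n^'m" where
  "cmat A = (\<chi> i j. complex_of_real (A $ i $ j))"

definition cvec :: "real^'n \<Rightarrow> complex^'n" where
  "cvec v = (\<chi> i. complex_of_real (v $ i))"

definition is_eigenvalue :: "real^'n^'n \<Rightarrow> complex \<Rightarrow> bool" where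
  "is_eigenvalue A l \<longleftrightarrow> (\<exists>v. v \<noteq> 0 \<and> cmat A *v v = l *s v)"

definition hurwitz :: "real^'n^'n \<Rightarrow> bool" where
  "hurwitz A \<longleftrightarrow> (\<forall>l. is_eigenvalue A l \<longrightarrow> Re l < 0)"

definition ones :: "'a::one^'n" where
  "ones = (\<chi> i. 1)"

definition first_unit :: "real^'n::{finite,wellorder}" where
  "first_unit = axis (LEAST i. True) 1"

definition ratfun :: "real poly \<Rightarrow> real poly \<Rightarrow> complex \<Rightarrow> complex" where
  "ratfun p q s = poly (map_poly complex_of_real p) s / poly (map_poly complex_of_real q) s"

end

theory Submission
  imports Defs "HOL-Computational_Algebra.Polynomial_Factorial" "HOL-Computational_Algebra.Field_as_Ring"
begin

lemma telescope:
  fixes Y al be :: "nat \<Rightarrow> complex" and s :: complex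
  shows "(\<Sum>k<Suc j. s^k * (s * Y k - (if k = 0 then 0 else Y (k-1)))) = s^Suc j * Y j"
proof (induction j)
  case 0 then show ?case by simp
next
  case (Suc j)
  show ?case using Suc by (simp add: algebra_simps)
qed

lemma telescope2:
  fixes Y al be :: "nat \<Rightarrow> complex" and s :: complex
  assumes n: "n > 0"
    and eq: "\<And>k. k < n \<Longrightarrow> s * Y k - (if k = 0 then 0 else Y (k-1)) + al k * Y (n-1) = be k"
  shows "Y (n-1) * (s^n + (\<Sum>k<n. al k * s^k)) = (\<Sum>k<n. be k * s^k)"
proof -
  have "s^n * Y (n-1) = (\<Sum>k<n. s^k * (s * Y k - (if k = 0 then 0 else Y (k-1))))"
    using telescope[of s Y "n-1"] n by simp
  also have "\<dots> = (\<Sum>k<n. s^k * (be k - al k * Y (n-1)))"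
    by (intro sum.cong refl) (simp add: eq[symmetric])
  also have "\<dots> = (\<Sum>k<n. be k * s^k) - Y (n-1) * (\<Sum>k<n. al k * s^k)"
    by (simp add: algebra_simps sum_subtractf sum_distrib_left)
  finally show ?thesis by (simp add: algebra_simps)
qed

lemma exists_enum:
  "\<exists>en::nat \<Rightarrow> 'm::{finite,wellorder}. bij_betw en {..<CARD('m)} UNIV \<and> en (CARD('m) - 1) = (LEAST i. True)"
proof -
  obtain f :: "nat \<Rightarrow> 'm" where f: "bij_betw f {0..<card (UNIV::'m set)} UNIV"
    using ex_bij_betw_nat_finite[of "UNIV::'m set"] by auto
  define a where "a = f (CARD('m) - 1)"
  define b :: 'm where "b = (LEAST i. True)"
  define sw where "sw = (\<lambda>x::'m. if x = a then b else if x = b then a else x)"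
  have "bij sw" unfolding bij_def inj_def sw_def by (auto split: if_splits)
  then have "bij_betw (sw \<circ> f) {..<CARD('m)} UNIV"
    using f by (simp add: atLeast0LessThan bij_betw_trans)
  moreover have "(sw \<circ> f) (CARD('m) - 1) = b" by (simp add: sw_def a_def)
  ultimately show ?thesis unfolding b_def by blast
qed

lemma cmat_nth[simp]: "cmat X $ i $ j = complex_of_real (X $ i $ j)"
  by (simp add: cmat_def)
lemma cvec_nth[simp]: "cvec v $ i = complex_of_real (v $ i)"
  by (simp add: cvec_def)
lemma cmat_mult: "cmat (X ** Y) = cmat X ** cmat Y"
  by (simp add: vec_eq_iff matrix_matrix_mult_def)
lemma cmat_mv: "cmat X *v cvec v = cvec (X *v v)"
  by (simp add: vec_eq_iff matrix_vector_mult_def)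
lemma cvec_eq_iff: "cvec v = cvec w \<longleftrightarrow> v = w"
  by (simp add: vec_eq_iff)
lemma cvec_minus: "cvec (- v) = - cvec v"
  by (simp add: vec_eq_iff)
lemma ifz_mult: "(if P then c else 0) * (x::'a::mult_zero) = (if P then c * x else 0)"
  by simp
lemma of_real_ifz: "(of_real (if P then c else 0) :: 'a::real_algebra_1) = (if P then of_real c else 0)"
  by simp
lemma mat_mv: "mat k *v (x :: 'a::comm_ring_1^'n) = k *s x"
  by (simp add: vec_eq_iff matrix_vector_mult_def mat_def ifz_mult)
lemma mv_scale: "(M :: 'a::comm_ring_1^'n^'m) *v (k *s x) = k *s (M *v x)"
  by (simp add: vec_eq_iff matrix_vector_mult_def sum_distrib_left algebra_simps)
lemma mv_diff: "(M :: 'a::comm_ring_1^'n^'m) *v (x - y) = M *v x - M *v y"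
  by (simp add: vec_eq_iff matrix_vector_mult_def sum_subtractf algebra_simps)
lemma mv_add: "(M :: 'a::comm_ring_1^'n^'m) *v (x + y) = M *v x + M *v y"
  by (simp add: vec_eq_iff matrix_vector_mult_def sum.distrib algebra_simps)
lemma mv_minus: "(M :: 'a::comm_ring_1^'n^'m) *v (- x) = - (M *v x)"
  by (simp add: vec_eq_iff matrix_vector_mult_def sum_negf)
lemma mat_diff_mv: "(M - N :: 'a::comm_ring_1^'n^'m) *v x = M *v x - N *v x"
  by (simp add: vec_eq_iff matrix_vector_mult_def sum_subtractf algebra_simps)

locale realiz =
  fixes en :: "nat \<Rightarrow> 'm::{finite,wellorder}" and a b :: "nat \<Rightarrow> real"
  assumes bij: "bij_betw en {..<CARD('m)} UNIV"
    and en_last: "en (CARD('m) - 1) = (LEAST i. True)"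
    and a_n: "a CARD('m) = 1" and b_n: "b CARD('m) = 0" and ab0: "a 0 = b 0"
begin

abbreviation "i0 \<equiv> (LEAST i::'m. True)"

definition ix :: "'m \<Rightarrow> nat" where "ix = the_inv_into {..<CARD('m)} en"

lemma n_pos: "CARD('m) > 0" by simp

lemma en_ix[simp]: "en (ix r) = r"
  unfolding ix_def using bij by (simp add: bij_betw_def f_the_inv_into_f)

lemma ix_lt[simp]: "ix r < CARD('m)"
  unfolding ix_def using bij
  by (metis UNIV_I bij_betw_def lessThan_iff the_inv_into_into subset_refl)

lemma ix_en[simp]: "k < CARD('m) \<Longrightarrow> ix (en k) = k"
  unfolding ix_def using bij by (simp add: bij_betw_def the_inv_into_f_f)

lemma ix_i0[simp]: "ix i0 = CARD('m) - 1"
  using en_last ix_en[of "CARD('m)-1"] by simp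

lemma ix_eq_iff: "k < CARD('m) \<Longrightarrow> ix r = k \<longleftrightarrow> r = en k"
  by auto

lemma sum_en: "(\<Sum>r\<in>UNIV. F r) = (\<Sum>k<CARD('m). F (en k))"
  using sum.reindex_bij_betw[OF bij, of F] by simp

definition Am :: "real^'m::{finite,wellorder}^'m::{finite,wellorder}" where
  "Am = (\<chi> r c. (if 0 < ix r \<and> ix c = ix r - 1 then 1 else 0) - (if c = i0 then a (ix r) else 0))"

definition bv :: "real^'m::{finite,wellorder}" where "bv = (\<chi> r. b (ix r))"
definition wv :: "real^'m::{finite,wellorder}" where "wv = (\<chi> r. a (Suc (ix r)) - b (Suc (ix r)))"
definition uv :: "real^'m::{finite,wellorder}" where "uv = wv - ones"

definition Sm :: "real^'m::{finite,wellorder}^'m::{finite,wellorder}" where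
  "Sm = (\<chi> r c. (if r = c then 1 else 0) + (if c = i0 then uv $ r else 0))"
definition Si :: "real^'m::{finite,wellorder}^'m::{finite,wellorder}" where
  "Si = (\<chi> r c. (if r = c then 1 else 0) - (if c = i0 then uv $ r else 0))"
definition Pm :: "real^'m::{finite,wellorder}^'m::{finite,wellorder}" where "Pm = Si ** Am ** Sm"

lemma uv_i0[simp]: "uv $ i0 = 0"
  using a_n b_n by (simp add: uv_def wv_def ones_def)


lemma Sm_mv: "Sm *v x = x + x $ i0 *s uv"
  by (simp add: vec_eq_iff matrix_vector_mult_def Sm_def sum.distrib distrib_right ifz_mult of_real_ifz)
lemma Si_mv: "Si *v x = x - x $ i0 *s uv"
  by (simp add: vec_eq_iff matrix_vector_mult_def Si_def sum_subtractf left_diff_distrib ifz_mult of_real_ifz)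
lemma cSm_mv: "cmat Sm *v x = x + x $ i0 *s cvec uv"
  by (simp add: vec_eq_iff matrix_vector_mult_def Sm_def sum.distrib distrib_right ifz_mult of_real_ifz)
lemma cSi_mv: "cmat Si *v x = x - x $ i0 *s cvec uv"
  by (simp add: vec_eq_iff matrix_vector_mult_def Si_def sum_subtractf left_diff_distrib ifz_mult of_real_ifz)

lemma Sm_Si: "Sm *v (Si *v x) = x" "Si *v (Sm *v x) = x"
  by (simp_all add: Sm_mv Si_mv vec_eq_iff algebra_simps)
lemma cSm_Si: "cmat Sm *v (cmat Si *v x) = x" "cmat Si *v (cmat Sm *v x) = x"
  by (simp_all add: cSm_mv cSi_mv vec_eq_iff algebra_simps)

lemma Am_mv: "k < CARD('m) \<Longrightarrow>
  (Am *v y) $ en k = (if k = 0 then 0 else y $ en (k-1)) - a k * y $ i0"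
proof -
  assume k: "k < CARD('m)"
  have "(Am *v y) $ en k = (\<Sum>c\<in>UNIV. (if 0 < k \<and> ix c = k - 1 then y $ c else 0)) - a k * y $ i0"
    using k by (simp add: matrix_vector_mult_def Am_def left_diff_distrib sum_subtractf ifz_mult of_real_ifz)
  also have "(\<Sum>c\<in>UNIV. (if 0 < k \<and> ix c = k - 1 then y $ c else 0)) = (if k = 0 then 0 else y $ en (k-1))"
    using k by (auto simp: ix_eq_iff)
  finally show ?thesis .
qed

lemma cAm_mv: "k < CARD('m) \<Longrightarrow>
  (cmat Am *v y) $ en k = (if k = 0 then 0 else y $ en (k-1)) - of_real (a k) * y $ i0"
proof -
  assume k: "k < CARD('m)"
  have "(cmat Am *v y) $ en k = (\<Sum>c\<in>UNIV. (if 0 < k \<and> ix c = k - 1 then y $ c else 0)) - of_real (a k) * y $ i0"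
    using k by (simp add: matrix_vector_mult_def Am_def left_diff_distrib sum_subtractf ifz_mult of_real_ifz cong: if_cong)
  also have "(\<Sum>c\<in>UNIV. (if 0 < k \<and> ix c = k - 1 then y $ c else 0)) = (if k = 0 then 0 else y $ en (k-1))"
    using k by (auto simp: ix_eq_iff)
  finally show ?thesis .
qed


lemma en_last': "en (CARD('m) - Suc 0) = i0" using en_last by simp

lemma vec_eq_en: "(x::'a^'m::{finite,wellorder}) = y \<longleftrightarrow> (\<forall>k<CARD('m). x $ en k = y $ en k)"
  by (metis en_ix ix_lt vec_eq_iff)

lemma ones_nth[simp]: "(ones :: 'a::one^'n) $ i = 1" by (simp add: ones_def)

lemma Sm_ones: "Sm *v ones = wv"
  by (simp add: Sm_mv uv_def)

lemma wv_i0[simp]: "wv $ i0 = 1"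
  using a_n b_n by (simp add: wv_def)

lemma Am_wv: "Am *v wv = - bv"
  unfolding vec_eq_en
proof (intro allI impI)
  fix k assume k: "k < CARD('m)"
  show "(Am *v wv) $ en k = (- bv) $ en k"
  proof (cases k)
    case 0 then show ?thesis using k ab0 by (simp add: Am_mv bv_def)
  next
    case (Suc j) then show ?thesis using k a_n b_n by (simp add: Am_mv bv_def wv_def)
  qed
qed

definition etav :: "real^'m::{finite,wellorder}" where "etav = - (Pm *v ones)"

lemma Pm_mv: "Pm *v x = Si *v (Am *v (Sm *v x))"
  by (metis Pm_def matrix_vector_mul_assoc)

lemma cPm_mv: "cmat Pm *v x = cmat Si *v (cmat Am *v (cmat Sm *v x))"
  by (metis Pm_def cmat_mult matrix_vector_mul_assoc)

lemma Sm_eta: "Sm *v etav = bv"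
  by (simp add: etav_def Pm_mv Sm_ones Am_wv mv_minus Sm_Si)

lemma C1:
  assumes eq: "(mat s - cmat Pm) *v x = cvec etav"
  shows "x $ i0 * (s^CARD('m) + (\<Sum>k<CARD('m). of_real (a k) * s^k)) = (\<Sum>k<CARD('m). of_real (b k) * s^k)"
proof -
  define y where "y = cmat Sm *v x"
  have "cmat Sm *v ((mat s - cmat Pm) *v x) = cvec bv"
    using eq by (simp add: cmat_mv Sm_eta)
  then have y_eq: "s *s y - cmat Am *v y = cvec bv"
    by (simp add: mat_diff_mv mat_mv mv_diff mv_scale cPm_mv cSm_Si y_def)
  have yi0: "y $ i0 = x $ i0" by (simp add: y_def cSm_mv)
  have "y $ en (CARD('m) - 1) * (s^CARD('m) + (\<Sum>k<CARD('m). of_real (a k) * s^k)) = (\<Sum>k<CARD('m). of_real (b k) * s^k)"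
  proof (rule telescope2[where Y = "\<lambda>k. y $ en k"])
    fix k assume k: "k < CARD('m)"
    have "(s *s y - cmat Am *v y) $ en k = cvec bv $ en k" using y_eq by simp
    then show "s * y $ en k - (if k = 0 then 0 else y $ en (k - 1)) + of_real (a k) * y $ en (CARD('m) - 1) = of_real (b k)"
      using k by (cases "k = 0") (simp_all add: cAm_mv bv_def en_last' algebra_simps)
  qed simp
  then show ?thesis using yi0 en_last by simp
qed

lemma C2:
  assumes ev: "cmat Pm *v v = l *s v" and nz: "v \<noteq> 0"
  shows "l^CARD('m) + (\<Sum>k<CARD('m). of_real (a k) * l^k) = 0"
proof -
  define y where "y = cmat Sm *v v"
  have ynz: "y \<noteq> 0"
  proof
    assume "y = 0"
    then have "cmat Si *v y = 0" by (simp add: y_def matrix_vector_mult_0_right)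
    then show False using nz by (simp add: y_def cSm_Si)
  qed
  have "cmat Sm *v (cmat Pm *v v) = cmat Sm *v (l *s v)" using ev by simp
  then have y_eq: "cmat Am *v y = l *s y"
    by (simp add: mv_scale cPm_mv cSm_Si y_def)
  have eqk: "l * y $ en k - (if k = 0 then 0 else y $ en (k - 1)) + of_real (a k) * y $ en (CARD('m) - 1) = 0"
    if k: "k < CARD('m)" for k
  proof -
    have "(cmat Am *v y) $ en k = (l *s y) $ en k" using y_eq by simp
    then have h: "l * y $ en k = (if k = 0 then 0 else y $ en (k-1)) - of_real (a k) * y $ i0"
      using k by (simp add: cAm_mv)
    show ?thesis by (simp only: h en_last) simp
  qed
  have tel: "y $ en (CARD('m) - 1) * (l^CARD('m) + (\<Sum>k<CARD('m). of_real (a k) * l^k)) = (\<Sum>k<CARD('m). 0 * l^k)"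
    by (rule telescope2[where Y = "\<lambda>k. y $ en k"]) (use eqk in simp_all)
  have "y $ en (CARD('m) - 1) \<noteq> 0"
  proof
    assume z: "y $ en (CARD('m) - 1) = 0"
    have "\<forall>j<CARD('m). y $ en (CARD('m) - 1 - j) = 0"
    proof (intro allI impI)
      fix j show "j < CARD('m) \<Longrightarrow> y $ en (CARD('m) - 1 - j) = 0"
      proof (induction j)
        case 0 then show ?case using z by simp
      next
        case (Suc j)
        define k where "k = CARD('m) - 1 - j"
        have k: "k < CARD('m)" "k \<noteq> 0" using Suc.prems by (auto simp: k_def)
        have "y $ en k = 0" using Suc by (simp add: k_def)
        then have "y $ en (k - 1) = 0" using eqk[OF k(1)] k z by simp
        moreover have "k - 1 = CARD('m) - 1 - Suc j" by (simp add: k_def)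
        ultimately show ?case by simp
      qed
    qed
    then have "y = 0" unfolding vec_eq_en
      by (metis diff_diff_cancel less_Suc_eq_le Suc_pred' n_pos diff_less_Suc zero_index)
    then show False using ynz by simp
  qed
  then show ?thesis using tel by simp
qed

end

definition mnorm :: "real^'n^'n \<Rightarrow> real" where
  "mnorm A = (\<Sum>i\<in>UNIV. \<Sum>j\<in>UNIV. \<bar>A $ i $ j\<bar>)"

lemma mnorm_ge0: "mnorm A \<ge> 0"
  by (simp add: mnorm_def sum_nonneg)

lemma entry_le_mnorm: "\<bar>A $ i $ j\<bar> \<le> mnorm A"
proof -
  have "\<bar>A $ i $ j\<bar> \<le> (\<Sum>j\<in>UNIV. \<bar>A $ i $ j\<bar>)"
    by (rule member_le_sum) auto
  also have "\<dots> \<le> mnorm A" unfolding mnorm_def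
    by (rule member_le_sum) (auto intro: sum_nonneg)
  finally show ?thesis .
qed

lemma row_le_mnorm: "(\<Sum>j\<in>UNIV. \<bar>A $ i $ j\<bar>) \<le> mnorm A"
  unfolding mnorm_def by (rule member_le_sum) (auto intro: sum_nonneg)

lemma mnorm_mult: "mnorm (A ** B) \<le> mnorm A * mnorm B"
proof -
  have "mnorm (A ** B) \<le> (\<Sum>i\<in>UNIV. \<Sum>j\<in>UNIV. \<Sum>k\<in>UNIV. \<bar>A $ i $ k\<bar> * \<bar>B $ k $ j\<bar>)"
    unfolding mnorm_def matrix_matrix_mult_def
    by (intro sum_mono) (simp, rule order_trans[OF sum_abs], simp add: abs_mult)
  also have "\<dots> = (\<Sum>i\<in>UNIV. \<Sum>k\<in>UNIV. \<bar>A $ i $ k\<bar> * (\<Sum>j\<in>UNIV. \<bar>B $ k $ j\<bar>))"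
  proof -
    have "\<And>i. (\<Sum>j\<in>UNIV. \<Sum>k\<in>UNIV. \<bar>A $ i $ k\<bar> * \<bar>B $ k $ j\<bar>) = (\<Sum>k\<in>UNIV. \<Sum>j\<in>UNIV. \<bar>A $ i $ k\<bar> * \<bar>B $ k $ j\<bar>)"
      by (rule sum.swap)
    then show ?thesis by (simp add: sum_distrib_left)
  qed
  also have "\<dots> \<le> (\<Sum>i\<in>UNIV. \<Sum>k\<in>UNIV. \<bar>A $ i $ k\<bar> * mnorm B)"
    by (intro sum_mono mult_left_mono row_le_mnorm) auto
  also have "\<dots> = mnorm A * mnorm B"
    by (simp add: mnorm_def sum_distrib_right)
  finally show ?thesis .
qed

lemma mnorm_mat1: "mnorm (mat 1 :: real^'n^'n) = real CARD('n)"
  by (simp add: mnorm_def mat_def if_distrib cong: if_cong)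

lemma mat_pow_bound: "mnorm (mat_pow A k) \<le> real CARD('n) * mnorm A ^ k"
  for A :: "real^'n^'n"
proof (induction k)
  case 0 then show ?case by (simp add: mnorm_mat1)
next
  case (Suc k)
  have "mnorm (mat_pow A (Suc k)) \<le> mnorm A * mnorm (mat_pow A k)"
    by (simp add: mnorm_mult)
  also have "\<dots> \<le> mnorm A * (real CARD('n) * mnorm A ^ k)"
    by (intro mult_left_mono Suc mnorm_ge0)
  finally show ?case by (simp add: algebra_simps)
qed

lemma norm_le_mnorm: "norm A \<le> mnorm A"
proof -
  have "norm A \<le> (\<Sum>i\<in>UNIV. norm (A $ i))"
    by (simp add: norm_vec_def L2_set_le_sum)
  also have "\<dots> \<le> mnorm A" unfolding mnorm_def
    by (intro sum_mono norm_le_l1_cart)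
  finally show ?thesis .
qed

lemma scaleR_mmult: "(c *\<^sub>R A) ** B = c *\<^sub>R (A ** B :: real^'n^'m)"
  by (simp add: vec_eq_iff matrix_matrix_mult_def sum_distrib_left algebra_simps)

lemma mmult_scaleR: "A ** (c *\<^sub>R B) = c *\<^sub>R (A ** B :: real^'n^'m)"
  by (simp add: vec_eq_iff matrix_matrix_mult_def sum_distrib_left algebra_simps)

lemma mat_pow_scaleR: "mat_pow (c *\<^sub>R A) k = c^k *\<^sub>R mat_pow A k"
  for A :: "real^'n^'n"
proof (induction k)
  case (Suc k)
  have "mat_pow (c *\<^sub>R A) (Suc k) = (c *\<^sub>R A) ** (c^k *\<^sub>R mat_pow A k)" using Suc by simp
  also have "\<dots> = (c * c^k) *\<^sub>R (A ** mat_pow A k)"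
    by (simp add: vec_eq_iff matrix_matrix_mult_def sum_distrib_left algebra_simps)
  finally show ?case by simp
qed simp

lemma mat_pow_Suc': "mat_pow A (Suc k) = mat_pow A k ** A"
  by (induction k) (simp_all add: matrix_mul_assoc)

lemma mexp_summable: "summable (\<lambda>k. (1 / fact k) *\<^sub>R mat_pow A k)"
  for A :: "real^'n^'n"
proof (rule summable_comparison_test')
  show "summable (\<lambda>k. real CARD('n) * (inverse (fact k) * mnorm A ^ k))"
    by (intro summable_mult summable_exp)
  fix k :: nat
  have "norm ((1 / fact k) *\<^sub>R mat_pow A k) = (1 / fact k) * norm (mat_pow A k)"
    by simp
  also have "\<dots> \<le> (1 / fact k) * (real CARD('n) * mnorm A ^ k)"
    by (intro mult_left_mono order_trans[OF norm_le_mnorm mat_pow_bound]) auto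
  finally show "norm ((1 / fact k) *\<^sub>R mat_pow A k) \<le> real CARD('n) * (inverse (fact k) * mnorm A ^ k)"
    by (simp add: field_simps)
qed

lemma mexp_nth: "mat_exp A $ i $ j = (\<Sum>k. mat_pow A k $ i $ j / fact k)"
  for A :: "real^'n^'n"
proof -
  have bl: "bounded_linear (\<lambda>X::real^'n^'n. X $ i $ j)"
    using bounded_linear_compose[OF bounded_linear_vec_nth bounded_linear_vec_nth] .
  show ?thesis unfolding mat_exp_def
    using bounded_linear.suminf[OF bl mexp_summable[of A]] by simp
qed

definition ecoef :: "real^'n^'n \<Rightarrow> 'n \<Rightarrow> 'n \<Rightarrow> nat \<Rightarrow> real" where
  "ecoef A i j k = mat_pow A k $ i $ j / fact k"

lemma mexp_t_nth: "mat_exp (t *\<^sub>R A) $ i $ j = (\<Sum>k. ecoef A i j k * t^k)"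
  by (simp add: mexp_nth mat_pow_scaleR ecoef_def mult.commute)

lemma ecoef_bound: "\<bar>ecoef A i j k * y^k\<bar> \<le> real CARD('n) * (inverse (fact k) * (mnorm A * \<bar>y\<bar>) ^ k)"
  for A :: "real^'n^'n"
proof -
  have "\<bar>ecoef A i j k * y^k\<bar> = \<bar>mat_pow A k $ i $ j\<bar> / fact k * \<bar>y\<bar>^k"
    by (simp add: ecoef_def abs_mult power_abs)
  also have "\<dots> \<le> (real CARD('n) * mnorm A ^ k) / fact k * \<bar>y\<bar>^k"
    using entry_le_mnorm[of "mat_pow A k" i j] mat_pow_bound[of A k]
    by (intro mult_right_mono divide_right_mono) auto
  finally show ?thesis by (simp add: field_simps power_mult_distrib)
qed

lemma ecoef_summable_abs: "summable (\<lambda>k. \<bar>ecoef A i j k * y^k\<bar>)"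
  for A :: "real^'n^'n"
  by (rule summable_comparison_test'[where g = "\<lambda>k. real CARD('n) * (inverse (fact k) * (mnorm A * \<bar>y\<bar>) ^ k)"])
     (auto intro: summable_mult summable_exp simp: ecoef_bound)

lemma ecoef_summable: "summable (\<lambda>k. ecoef A i j k * y^k)"
  for A :: "real^'n^'n"
  by (rule summable_rabs_cancel[OF ecoef_summable_abs])

lemma mexp_entry_bound: "\<bar>mat_exp (t *\<^sub>R A) $ i $ j\<bar> \<le> real CARD('n) * exp (mnorm A * \<bar>t\<bar>)"
  for A :: "real^'n^'n"
proof -
  have "\<bar>mat_exp (t *\<^sub>R A) $ i $ j\<bar> \<le> (\<Sum>k. \<bar>ecoef A i j k * t^k\<bar>)"
    unfolding mexp_t_nth by (rule summable_rabs[OF ecoef_summable_abs])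
  also have "\<dots> \<le> (\<Sum>k. real CARD('n) * (inverse (fact k) * (mnorm A * \<bar>t\<bar>) ^ k))"
    by (intro suminf_le ecoef_bound ecoef_summable_abs summable_mult summable_exp)
  also have "\<dots> = real CARD('n) * (\<Sum>k. inverse (fact k) * (mnorm A * \<bar>t\<bar>) ^ k)"
    by (rule suminf_mult[OF summable_exp])
  also have "(\<Sum>k. inverse (fact k) * (mnorm A * \<bar>t\<bar>) ^ k) = exp (mnorm A * \<bar>t\<bar>)"
  proof -
    have "(\<lambda>k. (mnorm A * \<bar>t\<bar>) ^ k /\<^sub>R fact k) = (\<lambda>k. inverse (fact k) * (mnorm A * \<bar>t\<bar>) ^ k)"
      by (simp add: field_simps)
    then show ?thesis using exp_converges[of "mnorm A * \<bar>t\<bar>"] sums_unique by metis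
  qed
  finally show ?thesis .
qed

lemma diffs_ecoef: "diffs (ecoef A i j) k = mat_pow A (Suc k) $ i $ j / fact k"
proof -
  have "fact (Suc k) = real (Suc k) * fact k" by simp
  moreover have "real (Suc k) \<noteq> 0" by simp
  ultimately show ?thesis unfolding diffs_def ecoef_def
    by (simp only:) (simp del: mat_pow.simps of_nat_Suc)
qed

lemma mexp_deriv_entry:
  "((\<lambda>t. mat_exp (t *\<^sub>R A) $ i $ j) has_real_derivative (A ** mat_exp (t *\<^sub>R A)) $ i $ j) (at t)"
proof -
  have d: "((\<lambda>t. \<Sum>k. ecoef A i j k * t^k) has_real_derivative (\<Sum>k. diffs (ecoef A i j) k * t^k)) (at t)"
    by (rule termdiffs_strong_converges_everywhere) (rule ecoef_summable)
  have "(\<Sum>k. diffs (ecoef A i j) k * t^k) = (\<Sum>k. \<Sum>l\<in>UNIV. A $ i $ l * (ecoef A l j k * t^k))"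
    by (simp add: diffs_ecoef matrix_matrix_mult_def ecoef_def sum_distrib_left sum_divide_distrib sum_distrib_right algebra_simps)
  also have "\<dots> = (\<Sum>l\<in>UNIV. \<Sum>k. A $ i $ l * (ecoef A l j k * t^k))"
    by (rule suminf_sum) (intro summable_mult ecoef_summable)
  also have "\<dots> = (A ** mat_exp (t *\<^sub>R A)) $ i $ j"
    by (simp add: matrix_matrix_mult_def mexp_t_nth suminf_mult ecoef_summable)
  finally show ?thesis using d by (simp add: mexp_t_nth)
qed

lemma mexp_comm: "A ** mat_exp (t *\<^sub>R A) = mat_exp (t *\<^sub>R A) ** A"
proof -
  have "(A ** mat_exp (t *\<^sub>R A)) $ i $ j = (mat_exp (t *\<^sub>R A) ** A) $ i $ j" for i j
  proof -
    have "(A ** mat_exp (t *\<^sub>R A)) $ i $ j = (\<Sum>l\<in>UNIV. \<Sum>k. A $ i $ l * (ecoef A l j k * t^k))"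
      by (simp add: matrix_matrix_mult_def mexp_t_nth suminf_mult ecoef_summable)
    also have "\<dots> = (\<Sum>k. \<Sum>l\<in>UNIV. A $ i $ l * (ecoef A l j k * t^k))"
      by (rule suminf_sum[symmetric]) (intro summable_mult ecoef_summable)
    also have "\<dots> = (\<Sum>k. \<Sum>l\<in>UNIV. (ecoef A i l k * t^k) * A $ l $ j)"
    proof (intro suminf_cong)
      fix k
      have "mat_pow A (Suc k) $ i $ j = (A ** mat_pow A k) $ i $ j" by simp
      moreover have "mat_pow A (Suc k) $ i $ j = (mat_pow A k ** A) $ i $ j" by (simp only: mat_pow_Suc')
      ultimately have "(\<Sum>l\<in>UNIV. A $ i $ l * mat_pow A k $ l $ j) = (\<Sum>l\<in>UNIV. mat_pow A k $ i $ l * A $ l $ j)"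
        by (simp add: matrix_matrix_mult_def)
      moreover have "(\<Sum>l\<in>UNIV. A $ i $ l * (ecoef A l j k * t^k)) = (\<Sum>l\<in>UNIV. A $ i $ l * mat_pow A k $ l $ j) * (t^k / fact k)"
        unfolding ecoef_def sum_distrib_right by (intro sum.cong refl) (simp add: field_simps)
      moreover have "(\<Sum>l\<in>UNIV. (ecoef A i l k * t^k) * A $ l $ j) = (\<Sum>l\<in>UNIV. mat_pow A k $ i $ l * A $ l $ j) * (t^k / fact k)"
        unfolding ecoef_def sum_distrib_right by (intro sum.cong refl) (simp add: field_simps)
      ultimately show "(\<Sum>l\<in>UNIV. A $ i $ l * (ecoef A l j k * t^k)) = (\<Sum>l\<in>UNIV. (ecoef A i l k * t^k) * A $ l $ j)"
        by simp
    qed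
    also have "\<dots> = (\<Sum>l\<in>UNIV. \<Sum>k. (ecoef A i l k * t^k) * A $ l $ j)"
      by (rule suminf_sum) (intro summable_mult2 ecoef_summable)
    also have "\<dots> = (mat_exp (t *\<^sub>R A) ** A) $ i $ j"
      by (simp add: matrix_matrix_mult_def mexp_t_nth suminf_mult2 ecoef_summable)
    finally show ?thesis .
  qed
  then show ?thesis by (simp add: vec_eq_iff)
qed

lemma mexp_zero: "mat_exp (0 *\<^sub>R A) = mat 1"
proof -
  have "mat_exp (0 *\<^sub>R A) $ i $ j = mat 1 $ i $ j" for i j
  proof -
    have "mat_exp (0 *\<^sub>R A) $ i $ j = (\<Sum>k. ecoef A i j k * 0^k)" by (rule mexp_t_nth)
    also have "\<dots> = ecoef A i j 0"
    proof -
      have "(\<lambda>k. ecoef A i j k * 0^k) = (\<lambda>k. if k = 0 then ecoef A i j k else 0)"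
        by (auto simp: power_0_left)
      then show ?thesis using sums_single[of 0 "ecoef A i j"] sums_unique by metis
    qed
    finally show ?thesis by (simp add: ecoef_def mat_def)
  qed
  then show ?thesis by (simp add: vec_eq_iff)
qed

lemma Ici_lebesgue[simp]: "{(0::real)..} \<in> sets lebesgue"
  by simp

lemma abs_int_mult_bdd:
  fixes \<phi> \<beta> :: "real \<Rightarrow> real"
  assumes ai: "\<phi> absolutely_integrable_on {0..}" and c: "continuous_on {0..} \<beta>"
    and B: "\<And>t. t \<ge> 0 \<Longrightarrow> \<bar>\<beta> t\<bar> \<le> B"
  shows "(\<lambda>t. \<beta> t * \<phi> t) absolutely_integrable_on {0..}"
proof (rule absolutely_integrable_bounded_measurable_product_real[OF _ Ici_lebesgue _ ai])
  show "\<beta> \<in> borel_measurable (lebesgue_on {0..})"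
    by (rule continuous_imp_measurable_on_sets_lebesgue[OF c]) simp
  show "bounded (\<beta> ` {0..})"
    unfolding bounded_iff using B by auto
qed

lemma lerch_pos:
  fixes \<phi> :: "real \<Rightarrow> real"
  assumes cont: "continuous_on {0..} \<phi>"
    and ai: "\<phi> absolutely_integrable_on {0..}"
    and mom: "\<And>k::nat. ((\<lambda>t. \<phi> t * exp (-t) ^ k) has_integral 0) {0..}"
    and t0: "t0 \<ge> 0" and pos: "\<phi> t0 > 0"
  shows False
proof -
  obtain \<delta> where \<delta>: "\<delta> > 0" "\<And>t. t \<ge> 0 \<Longrightarrow> \<bar>t - t0\<bar> < \<delta> \<Longrightarrow> \<phi> t > \<phi> t0 / 2"
  proof -
    from cont t0 pos obtain d where d: "d > 0" "\<forall>x'\<in>{0..}. dist x' t0 < d \<longrightarrow> dist (\<phi> x') (\<phi> t0) < \<phi> t0 / 2"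
      unfolding continuous_on_iff by (metis atLeast_iff half_gt_zero)
    show ?thesis
    proof (rule that[of d])
      show "d > 0" by fact
      fix t :: real assume "t \<ge> 0" "\<bar>t - t0\<bar> < d"
      then have "\<bar>\<phi> t - \<phi> t0\<bar> < \<phi> t0 / 2" using d(2) by (auto simp: dist_real_def)
      then show "\<phi> t > \<phi> t0 / 2" by linarith
    qed
  qed
  define u0 where "u0 = exp (-t0)"
  define r where "r = u0 * (1 - exp (-\<delta>))"
  have u0: "u0 > 0" by (simp add: u0_def)
  have r: "r > 0" using \<delta> u0 by (simp add: r_def)
  define \<psi> where "\<psi> t = max 0 (r - \<bar>exp (-t) - u0\<bar>)" for t
  have ee: "2 - exp (-\<delta>) \<le> exp \<delta>"
  proof -
    have "exp \<delta> + exp (-\<delta>) \<ge> 2"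
    proof -
      have "0 \<le> (exp (\<delta>/2) - exp (-\<delta>/2))^2" by simp
      also have "\<dots> = exp \<delta> + exp (-\<delta>) - 2"
        by (simp add: power2_eq_square algebra_simps flip: exp_add)
      finally show ?thesis by simp
    qed
    then show ?thesis by simp
  qed
  have near: "\<bar>t - t0\<bar> < \<delta>" if "\<bar>exp (-t) - u0\<bar> < r" for t
  proof -
    have "exp (-t) > u0 * exp (-\<delta>)" using that by (simp add: r_def algebra_simps abs_less_iff)
    then have "exp (-t) > exp (-(t0 + \<delta>))" by (simp add: u0_def flip: exp_add)
    then have 1: "t < t0 + \<delta>" by simp
    have "exp (-t) < u0 * (2 - exp (-\<delta>))" using that by (simp add: r_def algebra_simps abs_less_iff)
    also have "\<dots> \<le> u0 * exp \<delta>" using ee u0 by (intro mult_left_mono) auto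
    also have "\<dots> = exp (-(t0 - \<delta>))" by (simp add: u0_def flip: exp_add)
    finally have 2: "t > t0 - \<delta>" by simp
    from 1 2 show ?thesis by (simp add: abs_less_iff)
  qed
  have \<psi>_ge0: "\<psi> t \<ge> 0" for t by (simp add: \<psi>_def)
  have \<psi>_le: "\<bar>\<psi> t\<bar> \<le> r" for t using r by (simp add: \<psi>_def)
  have prod_ge0: "\<psi> t * \<phi> t \<ge> 0" if "t \<ge> 0" for t
  proof (cases "\<psi> t > 0")
    case True
    then have "\<bar>exp (-t) - u0\<bar> < r" by (simp add: \<psi>_def)
    then have "\<phi> t > 0" using near \<delta>(2)[OF that] pos by fastforce
    then show ?thesis using \<psi>_ge0 by simp
  next
    case False then have "\<psi> t = 0" using \<psi>_ge0[of t] by simp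
    then show ?thesis by simp
  qed
  have cont\<psi>: "continuous_on S \<psi>" for S
    unfolding \<psi>_def by (intro continuous_intros)
  have \<psi>0: "\<psi> t0 = r" by (simp add: \<psi>_def u0_def r)
  have cprod: "continuous_on {0..} (\<lambda>t. \<psi> t * \<phi> t)"
    by (intro continuous_intros cont\<psi> cont)
  have ai_prod: "(\<lambda>t. \<psi> t * \<phi> t) absolutely_integrable_on {0..}"
    by (rule abs_int_mult_bdd[OF ai cont\<psi> \<psi>_le])
  define I0 where "I0 = integral {0..} (\<lambda>t. \<psi> t * \<phi> t)"
  have I0: "I0 > 0"
  proof -
    obtain \<rho> where \<rho>: "\<rho> > 0" "\<And>t. t \<ge> 0 \<Longrightarrow> \<bar>t - t0\<bar> < \<rho> \<Longrightarrow> \<psi> t * \<phi> t > r * \<phi> t0 / 2"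
    proof -
      have "r * \<phi> t0 > 0" using r pos by simp
      with cprod t0 obtain d where d: "d > 0" "\<forall>x'\<in>{0..}. dist x' t0 < d \<longrightarrow> dist (\<psi> x' * \<phi> x') (\<psi> t0 * \<phi> t0) < r * \<phi> t0 / 2"
        unfolding continuous_on_iff by (metis atLeast_iff half_gt_zero)
      show ?thesis
      proof (rule that[of d])
        show "d > 0" by fact
        fix t :: real assume "t \<ge> 0" "\<bar>t - t0\<bar> < d"
        then have "\<bar>\<psi> t * \<phi> t - r * \<phi> t0\<bar> < r * \<phi> t0 / 2" using d(2) \<psi>0 by (auto simp: dist_real_def)
        then show "\<psi> t * \<phi> t > r * \<phi> t0 / 2" by linarith
      qed
    qed
    define J where "J = {t0..t0 + \<rho>/2}"
    have J: "J \<subseteq> {0..}" using t0 by (auto simp: J_def)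
    have intJ: "(\<lambda>t. \<psi> t * \<phi> t) integrable_on J"
      unfolding J_def by (rule integrable_continuous_interval) (use J cprod continuous_on_subset J_def in blast)
    have "integral J (\<lambda>t. r * \<phi> t0 / 2) \<le> integral J (\<lambda>t. \<psi> t * \<phi> t)"
    proof (rule integral_le)
      show "(\<lambda>t. r * \<phi> t0 / 2) integrable_on J" unfolding J_def by (rule integrable_const_ivl)
      show "(\<lambda>t. \<psi> t * \<phi> t) integrable_on J" by (rule intJ)
      fix x assume "x \<in> J"
      then have "x \<ge> 0" "\<bar>x - t0\<bar> < \<rho>" using t0 \<rho>(1) by (auto simp: J_def)
      then show "r * \<phi> t0 / 2 \<le> \<psi> x * \<phi> x" using \<rho>(2) by fastforce
    qed
    also have "\<dots> \<le> I0" unfolding I0_def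
      by (rule integral_subset_le[OF J intJ]) (use ai_prod prod_ge0 absolutely_integrable_on_def in auto)
    finally have le: "integral J (\<lambda>t. r * \<phi> t0 / 2) \<le> I0" .
    have eqJ: "integral J (\<lambda>t. r * \<phi> t0 / 2) = \<rho> / 2 * (r * \<phi> t0 / 2)"
      using \<rho> by (simp add: J_def)
    have "\<rho> / 2 * (r * \<phi> t0 / 2) \<le> I0" using le by (simp only: eqJ)
    moreover have "\<rho> / 2 * (r * \<phi> t0 / 2) > 0" using \<rho> r pos by simp
    ultimately show ?thesis by linarith
  qed
  define L where "L = integral {0..} (\<lambda>t. \<bar>\<phi> t\<bar>)"
  have absint: "(\<lambda>t. \<bar>\<phi> t\<bar>) integrable_on {0..}"
    using ai unfolding absolutely_integrable_on_def by simp
  have L: "L \<ge> 0" unfolding L_def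
    by (rule integral_nonneg[OF absint]) auto
  define \<epsilon> where "\<epsilon> = I0 / (2 * (L + 1))"
  have \<epsilon>: "\<epsilon> > 0" using I0 L by (simp add: \<epsilon>_def)
  have cont\<Psi>: "continuous_on {0..1} (\<lambda>u. max 0 (r - \<bar>u - u0\<bar>))"
    by (intro continuous_intros)
  obtain g where g: "real_polynomial_function g" "\<And>x. x \<in> {0..1} \<Longrightarrow> \<bar>max 0 (r - \<bar>x - u0\<bar>) - g x\<bar> < \<epsilon>"
    using Stone_Weierstrass_real_polynomial_function[OF compact_Icc cont\<Psi> \<epsilon>] by blast
  obtain c N where gc: "g = (\<lambda>x. \<Sum>i\<le>N. c i * x^i)"
    using g(1) real_polynomial_function_iff_sum by auto
  have gint: "((\<lambda>t. g (exp (-t)) * \<phi> t) has_integral 0) {0..}"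
  proof -
    have "((\<lambda>t. \<Sum>i\<le>N. c i * (\<phi> t * exp (-t) ^ i)) has_integral (\<Sum>i\<le>N. c i * 0)) {0..}"
      by (intro has_integral_sum has_integral_mult_right mom) auto
    moreover have "(\<lambda>t. \<Sum>i\<le>N. c i * (\<phi> t * exp (-t) ^ i)) = (\<lambda>t. g (exp (-t)) * \<phi> t)"
      by (simp add: gc sum_distrib_left sum_distrib_right algebra_simps)
    ultimately show ?thesis by simp
  qed
  have intd: "(\<lambda>t. \<psi> t * \<phi> t - g (exp (-t)) * \<phi> t) integrable_on {0..}"
    using ai_prod gint absolutely_integrable_on_def integrable_diff by blast
  have "I0 = integral {0..} (\<lambda>t. \<psi> t * \<phi> t - g (exp (-t)) * \<phi> t)"
    unfolding I0_def using ai_prod gint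
    by (subst integral_diff) (auto simp: absolutely_integrable_on_def integral_unique)
  also have "\<dots> \<le> \<bar>integral {0..} (\<lambda>t. \<psi> t * \<phi> t - g (exp (-t)) * \<phi> t)\<bar>" by simp
  also have "\<dots> \<le> integral {0..} (\<lambda>t. \<epsilon> * \<bar>\<phi> t\<bar>)"
  proof -
    have ie: "(\<lambda>t. \<epsilon> * \<bar>\<phi> t\<bar>) integrable_on {0..}"
      using integrable_on_cmult_left[OF absint, of \<epsilon>] by simp
    have bnd: "norm (\<psi> t * \<phi> t - g (exp (-t)) * \<phi> t) \<le> \<epsilon> * \<bar>\<phi> t\<bar>" if t: "t \<in> {0..}" for t
    proof -
      have "exp (-t) \<in> {0..1}" using t by auto
      then have "\<bar>\<psi> t - g (exp (-t))\<bar> < \<epsilon>" using g(2) by (simp add: \<psi>_def)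
      then have "\<bar>\<psi> t - g (exp (-t))\<bar> * \<bar>\<phi> t\<bar> \<le> \<epsilon> * \<bar>\<phi> t\<bar>"
        by (intro mult_right_mono) auto
      then show ?thesis
        by (simp add: abs_mult left_diff_distrib[symmetric])
    qed
    show ?thesis using integral_norm_bound_integral[OF intd ie bnd] by simp
  qed
  also have "\<dots> = \<epsilon> * L" by (simp add: L_def)
  finally have "I0 \<le> \<epsilon> * L" .
  moreover have "\<epsilon> * L < I0"
  proof -
    have "\<epsilon> * L = I0 * (L / (2 * (L + 1)))" by (simp add: \<epsilon>_def)
    also have "\<dots> < I0 * 1" using I0 L by (intro mult_strict_left_mono) auto
    finally show ?thesis by simp
  qed
  ultimately show False by simp
qed

lemma lerch:
  fixes f :: "real \<Rightarrow> real"
  assumes cont: "continuous_on {0..} f"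
    and ai: "(\<lambda>t. f t * exp (-sz * t)) absolutely_integrable_on {0..}"
    and zero: "\<And>k::nat. ((\<lambda>t. f t * exp (-(sz + real k) * t)) has_integral 0) {0..}"
    and t: "t \<ge> 0"
  shows "f t = 0"
proof (rule ccontr)
  assume ne: "f t \<noteq> 0"
  define \<phi> where "\<phi> t = f t * exp (-sz * t)" for t
  have c\<phi>: "continuous_on {0..} \<phi>" unfolding \<phi>_def by (intro continuous_intros cont)
  have eq: "\<phi> t * exp (-t) ^ k = f t * exp (-(sz + real k) * t)" for t k
    by (simp add: \<phi>_def algebra_simps flip: exp_of_nat_mult exp_add)
  have mom: "((\<lambda>t. \<phi> t * exp (-t) ^ k) has_integral 0) {0..}" for k
    using zero[of k] by (simp add: eq)
  have mom': "((\<lambda>t. - \<phi> t * exp (-t) ^ k) has_integral 0) {0..}" for k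
    using has_integral_neg[OF mom[of k]] by simp
  have ai\<phi>: "\<phi> absolutely_integrable_on {0..}" using ai by (simp add: \<phi>_def[abs_def])
  have ai\<phi>': "(\<lambda>t. - \<phi> t) absolutely_integrable_on {0..}"
    using absolutely_integrable_scaleR_left[OF ai\<phi>, of "-1"] by simp
  have c\<phi>': "continuous_on {0..} (\<lambda>t. - \<phi> t)" by (intro continuous_intros c\<phi>)
  have "\<phi> t \<noteq> 0" using ne by (simp add: \<phi>_def)
  then consider "\<phi> t > 0" | "- \<phi> t > 0" by linarith
  then show False
  proof cases
    case 1 then show False using lerch_pos[OF c\<phi> ai\<phi> mom t] by simp
  next
    case 2 then show False using lerch_pos[OF c\<phi>' ai\<phi>' mom' t] by simp
  qed
qed

lemma cpoly_add: "map_poly (of_real :: real \<Rightarrow> complex) (p + q) = map_poly of_real p + map_poly of_real q"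
  by (intro poly_eqI) (simp_all add: coeff_map_poly)

lemma cpoly_mult: "map_poly (of_real :: real \<Rightarrow> complex) (p * q) = map_poly of_real p * map_poly of_real q"
  by (intro poly_eqI) (simp_all add: coeff_map_poly coeff_mult)

lemma coprime_no_common_root:
  fixes p q :: "real poly"
  assumes "coprime p q" "poly (map_poly of_real q) l = (0::complex)"
  shows "poly (map_poly of_real p) l \<noteq> 0"
proof
  assume p0: "poly (map_poly of_real p) l = 0"
  define u where "u = fst (bezout_coefficients p q)"
  define v where "v = snd (bezout_coefficients p q)"
  have "u * p + v * q = 1"
    using bezout_coefficients_fst_snd[of p q] assms(1) by (simp add: u_def v_def)
  then have "poly (map_poly of_real (u * p + v * q)) l = (1::complex)" by simp
  then show False using p0 assms(2) by (simp add: cpoly_add cpoly_mult)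
qed

lemma roots_lhp:
  fixes h :: "real \<Rightarrow> real" and p q :: "real poly"
  assumes bibo: "h absolutely_integrable_on {0..}"
    and laplace: "\<And>s. Re s > 0 \<Longrightarrow>
        ((\<lambda>t. complex_of_real (h t) * exp (- s * complex_of_real t)) has_integral ratfun p q s) {0..}"
    and cop: "coprime p q" and qnz: "q \<noteq> 0"
    and root: "poly (map_poly of_real q) l = 0"
  shows "Re l < 0"
proof (rule ccontr)
  assume "\<not> Re l < 0"
  then have Rel: "Re l \<ge> 0" by simp
  define P where "P = poly (map_poly (of_real :: real \<Rightarrow> complex) p)"
  define Q where "Q = poly (map_poly (of_real :: real \<Rightarrow> complex) q)"
  define M where "M = integral {0..} (\<lambda>t. \<bar>h t\<bar>)"
  have absint: "(\<lambda>t. \<bar>h t\<bar>) integrable_on {0..}"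
    using bibo unfolding absolutely_integrable_on_def by simp
  have M: "M \<ge> 0" unfolding M_def by (rule integral_nonneg[OF absint]) auto
  have bound: "norm (ratfun p q s) \<le> M" if s: "Re s > 0" for s
  proof -
    have hi: "((\<lambda>t. complex_of_real (h t) * exp (- s * complex_of_real t)) has_integral ratfun p q s) {0..}"
      using laplace[OF s] .
    have "norm (integral {0..} (\<lambda>t. complex_of_real (h t) * exp (- s * complex_of_real t))) \<le> integral {0..} (\<lambda>t. \<bar>h t\<bar>)"
    proof (rule integral_norm_bound_integral)
      show "(\<lambda>t. complex_of_real (h t) * exp (- s * complex_of_real t)) integrable_on {0..}"
        using hi by blast
      show "(\<lambda>t. \<bar>h t\<bar>) integrable_on {0..}" by (rule absint)
      fix t :: real assume t: "t \<in> {0..}"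
      have "norm (complex_of_real (h t) * exp (- s * complex_of_real t)) = \<bar>h t\<bar> * exp (- (Re s * t))"
        by (simp add: norm_mult)
      also have "\<dots> \<le> \<bar>h t\<bar> * 1" using s t by (intro mult_left_mono) auto
      finally show "norm (complex_of_real (h t) * exp (- s * complex_of_real t)) \<le> \<bar>h t\<bar>" by simp
    qed
    then show ?thesis using hi by (simp add: M_def integral_unique)
  qed
  have Pl: "P l \<noteq> 0" using coprime_no_common_root[OF cop root] by (simp add: P_def)
  have Ql: "Q l = 0" using root by (simp add: Q_def)
  define e1 where "e1 = norm (P l) / (2 * (M + 1))"
  define e2 where "e2 = norm (P l) / 2"
  have e1: "e1 > 0" and e2: "e2 > 0" using Pl M by (auto simp: e1_def e2_def)
  obtain d1 where d1: "d1 > 0" "\<And>z. norm (z - l) < d1 \<Longrightarrow> norm (Q z - Q l) < e1"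
  proof -
    have "isCont Q l" unfolding Q_def by simp
    then obtain dd where dd: "dd > 0" "\<And>z. z \<noteq> l \<Longrightarrow> norm (z - l) < dd \<Longrightarrow> norm (Q z - Q l) < e1"
      using e1 unfolding isCont_def LIM_eq by blast
    show ?thesis
    proof (rule that[of dd])
      show "dd > 0" by fact
      fix z assume "norm (z - l) < dd"
      then show "norm (Q z - Q l) < e1" using dd e1 by (cases "z = l") auto
    qed
  qed
  obtain d2 where d2: "d2 > 0" "\<And>z. norm (z - l) < d2 \<Longrightarrow> norm (P z - P l) < e2"
  proof -
    have "isCont P l" unfolding P_def by simp
    then obtain dd where dd: "dd > 0" "\<And>z. z \<noteq> l \<Longrightarrow> norm (z - l) < dd \<Longrightarrow> norm (P z - P l) < e2"
      using e2 unfolding isCont_def LIM_eq by blast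
    show ?thesis
    proof (rule that[of dd])
      show "dd > 0" by fact
      fix z assume "norm (z - l) < dd"
      then show "norm (P z - P l) < e2" using dd e2 by (cases "z = l") auto
    qed
  qed
  define d where "d = min d1 d2"
  have d: "d > 0" using d1 d2 by (simp add: d_def)
  have Qnz: "map_poly (of_real :: real \<Rightarrow> complex) q \<noteq> 0" using qnz by (simp add: map_poly_eq_0_iff)
  have fin: "finite {r::real. Q (l + of_real r) = 0}"
  proof -
    have "{r::real. Q (l + of_real r) = 0} \<subseteq> (\<lambda>z. Re (z - l)) ` {z. Q z = 0}"
    proof
      fix r assume "r \<in> {r::real. Q (l + of_real r) = 0}"
      then show "r \<in> (\<lambda>z. Re (z - l)) ` {z. Q z = 0}"
        by (intro image_eqI[where x = "l + of_real r"]) auto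
    qed
    moreover have "finite {z. Q z = 0}" using poly_roots_finite[OF Qnz] by (simp add: Q_def)
    ultimately show ?thesis using finite_subset by blast
  qed
  have "infinite {0<..<d}" using d by simp
  then have "infinite ({0<..<d} - {r::real. Q (l + of_real r) = 0})"
    by (rule Diff_infinite_finite[OF fin])
  then obtain r where "r \<in> {0<..<d} - {r::real. Q (l + of_real r) = 0}"
    using infinite_imp_nonempty by blast
  then have r: "r \<in> {0<..<d}" "Q (l + of_real r) \<noteq> 0" by auto
  define s where "s = l + of_real r"
  have nrm: "norm (s - l) < d" using r by (simp add: s_def)
  have Res: "Re s > 0" using r Rel by (simp add: s_def)
  have Qs: "norm (Q s) < e1" "Q s \<noteq> 0" using d1(2)[of s] nrm Ql r by (auto simp: d_def s_def)
  have Ps: "norm (P s) > e2"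
  proof -
    have a: "norm (P s - P l) < e2" using d2(2)[of s] nrm by (simp add: d_def)
    have b: "norm (P l) \<le> norm (P s) + norm (P l - P s)" by (rule norm_triangle_sub)
    have c: "norm (P l - P s) = norm (P s - P l)" by (rule norm_minus_commute)
    from a b c show ?thesis unfolding e2_def by linarith
  qed
  have "norm (ratfun p q s) = norm (P s) / norm (Q s)"
    by (simp add: ratfun_def P_def Q_def norm_divide)
  also have "\<dots> > e2 / e1"
  proof -
    have "e2 / e1 < norm (P s) / e1" using Ps e1 by (simp add: divide_strict_right_mono)
    also have "\<dots> \<le> norm (P s) / norm (Q s)" using Qs e1 Ps e2
      by (intro divide_left_mono) auto
    finally show ?thesis .
  qed
  also have "e2 / e1 = M + 1"
    using Pl M by (simp add: e1_def e2_def)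
  finally have "norm (ratfun p q s) > M + 1" .
  then show False using bound[OF Res] by simp
qed

lemma deriv_y:
  fixes A :: "real^'n^'n"
  shows "((\<lambda>t. (mat_exp (t *\<^sub>R A) *v v) $ i) has_real_derivative (A *v (mat_exp (t *\<^sub>R A) *v v)) $ i) (at t)"
proof -
  have "((\<lambda>t. \<Sum>j\<in>UNIV. mat_exp (t *\<^sub>R A) $ i $ j * v $ j) has_real_derivative
        (\<Sum>j\<in>UNIV. (A ** mat_exp (t *\<^sub>R A)) $ i $ j * v $ j)) (at t)"
    by (intro DERIV_sum DERIV_cmult_right mexp_deriv_entry)
  moreover have "(\<Sum>j\<in>UNIV. (A ** mat_exp (t *\<^sub>R A)) $ i $ j * v $ j) = (A *v (mat_exp (t *\<^sub>R A) *v v)) $ i"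
    unfolding matrix_vector_mul_assoc by (simp add: matrix_vector_mult_def)
  ultimately show ?thesis by (simp add: matrix_vector_mult_def)
qed

lemma cont_y:
  fixes A :: "real^'n^'n"
  shows "continuous_on S (\<lambda>t. (mat_exp (t *\<^sub>R A) *v v) $ i)"
  by (rule continuous_at_imp_continuous_on) (use DERIV_isCont[OF deriv_y] in blast)

lemma y_zero: "(mat_exp (0 *\<^sub>R A) *v v) = v" for A :: "real^'n^'n"
  using mexp_zero[of A] by simp

lemma y_zero': "(mat_exp 0 *v v) = v" for v :: "real^'n"
  using mexp_zero[of "0::real^'n^'n"] by simp

lemma bound_y:
  fixes A :: "real^'n^'n"
  assumes "t \<ge> 0"
  shows "\<bar>(mat_exp (t *\<^sub>R A) *v v) $ i\<bar> \<le> (real CARD('n) * (\<Sum>j\<in>UNIV. \<bar>v $ j\<bar>)) * exp (mnorm A * t)"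
proof -
  have "\<bar>(mat_exp (t *\<^sub>R A) *v v) $ i\<bar> \<le> (\<Sum>j\<in>UNIV. \<bar>mat_exp (t *\<^sub>R A) $ i $ j\<bar> * \<bar>v $ j\<bar>)"
    unfolding matrix_vector_mult_def by (simp, rule order_trans[OF sum_abs], simp add: abs_mult)
  also have "\<dots> \<le> (\<Sum>j\<in>UNIV. (real CARD('n) * exp (mnorm A * \<bar>t\<bar>)) * \<bar>v $ j\<bar>)"
    by (intro sum_mono mult_right_mono mexp_entry_bound) auto
  finally show ?thesis using assms by (simp add: sum_distrib_left sum_distrib_right algebra_simps)
qed

lemma limint:
  fixes f :: "real \<Rightarrow> real"
  assumes c: "continuous_on {0..} f" and ai: "f absolutely_integrable_on {0..}"
  shows "(\<lambda>n. integral {0..real n} f) \<longlonglongrightarrow> integral {0..} f"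
proof -
  define fn where "fn n t = (if t \<in> {0..real n} then f t else 0)" for n t
  have intn: "(f has_integral integral {0..real n} f) {0..real n}" for n
    by (intro integrable_integral integrable_continuous_interval continuous_on_subset[OF c]) auto
  have hfn: "(fn n has_integral integral {0..real n} f) {0..}" for n
    unfolding fn_def using has_integral_restrict[of "{0..real n}" "{0..}" f] intn[of n] by auto
  have absint: "(\<lambda>t. \<bar>f t\<bar>) integrable_on {0..}"
    using ai unfolding absolutely_integrable_on_def by simp
  have dc: "(\<lambda>n. integral {0..} (fn n)) \<longlonglongrightarrow> integral {0..} f"
  proof (rule dominated_convergence(2)[where h = "\<lambda>t. \<bar>f t\<bar>"])
    show "fn n integrable_on {0..}" for n using hfn by blast
    show "(\<lambda>t. \<bar>f t\<bar>) integrable_on {0..}" by (rule absint)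
    show "norm (fn n t) \<le> \<bar>f t\<bar>" if "t \<in> {0..}" for n t by (simp add: fn_def)
    show "(\<lambda>n. fn n t) \<longlonglongrightarrow> f t" if t: "t \<in> {0..}" for t
    proof (rule tendsto_eventually)
      have ev: "eventually (\<lambda>n. real n \<ge> t) sequentially"
        by (meson eventually_sequentiallyI nat_ceiling_le_eq)
      show "eventually (\<lambda>n. fn n t = f t) sequentially"
        by (rule eventually_mono[OF ev]) (use t in \<open>auto simp: fn_def\<close>)
    qed
  qed
  moreover have "integral {0..} (fn n) = integral {0..real n} f" for n
    using hfn integral_unique by blast
  ultimately show ?thesis by simp
qed

lemma exp_neg_lim: "c > 0 \<Longrightarrow> (\<lambda>n. exp (- (c * real n))) \<longlonglongrightarrow> 0"
proof -
  assume c: "c > 0"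
  have "(\<lambda>n. exp (- c) ^ n) \<longlonglongrightarrow> 0" using c by (intro LIMSEQ_power_zero) simp
  moreover have "exp (- c) ^ n = exp (- (c * real n))" for n
    by (simp add: exp_of_nat_mult[symmetric] mult.commute)
  ultimately show ?thesis by simp
qed

lemma laplace_y:
  fixes A :: "real^'n^'n" and v :: "real^'n"
  assumes s: "s > mnorm A"
  defines "w \<equiv> \<lambda>i t. (mat_exp (t *\<^sub>R A) *v v) $ i * exp (- s * t)"
  shows "\<And>i. w i absolutely_integrable_on {0..}"
    and "s *s (\<chi> i. integral {0..} (w i)) - A *v (\<chi> i. integral {0..} (w i)) = v"
proof -
  define K where "K = mnorm A"
  define C where "C = real CARD('n) * (\<Sum>j\<in>UNIV. \<bar>v $ j\<bar>)"
  have K: "K \<ge> 0" by (simp add: K_def mnorm_ge0)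
  have C: "C \<ge> 0" by (simp add: C_def sum_nonneg)
  have sK: "s - K > 0" using s by (simp add: K_def)
  have cw: "continuous_on S (w i)" for i S
    unfolding w_def by (intro continuous_intros cont_y)
  have wb: "\<bar>w i t\<bar> \<le> C * exp (- (s - K) * t)" if t: "t \<ge> 0" for i t
  proof -
    have "\<bar>w i t\<bar> = \<bar>(mat_exp (t *\<^sub>R A) *v v) $ i\<bar> * exp (- s * t)"
      by (simp add: w_def abs_mult)
    also have "\<dots> \<le> (C * exp (K * t)) * exp (- s * t)"
      using bound_y[OF t, of A v i] by (intro mult_right_mono) (auto simp: C_def K_def)
    also have "\<dots> = C * exp (- (s - K) * t)"
      by (simp add: algebra_simps flip: exp_add)
    finally show ?thesis .
  qed
  have bint: "(\<lambda>t. C * exp (- (s - K) * t)) integrable_on {0..}"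
    using integrable_on_cmult_left[OF integrable_on_exp_minus_to_infinity[OF sK, of 0], of C]
    by simp
  show ai: "w i absolutely_integrable_on {0..}" for i
  proof (rule measurable_bounded_by_integrable_imp_absolutely_integrable[OF _ _ bint])
    show "w i \<in> borel_measurable (lebesgue_on {0..})"
      by (rule continuous_imp_measurable_on_sets_lebesgue[OF cw]) simp
    show "{0::real..} \<in> sets lebesgue" by simp
    show "norm (w i t) \<le> C * exp (- (s - K) * t)" if "t \<in> {0..}" for t
      using wb[of t i] that by simp
  qed
  define Z where "Z i = integral {0..} (w i)" for i
  define I where "I i n = integral {0..real n} (w i)" for i n
  have IZ: "(\<lambda>n. I i n) \<longlonglongrightarrow> Z i" for i
    unfolding I_def Z_def by (rule limint[OF cw ai])
  have key: "(\<Sum>j\<in>UNIV. A $ i $ j * I j n) - s * I i n = exp (- s * real n) * (mat_exp (real n *\<^sub>R A) *v v) $ i - v $ i" for i n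
  proof -
    let ?y = "\<lambda>i t. (mat_exp (t *\<^sub>R A) *v v) $ i"
    let ?F = "\<lambda>t. exp (- s * t) * ?y i t"
    let ?g = "\<lambda>t. (\<Sum>j\<in>UNIV. A $ i $ j * w j t) - s * w i t"
    have hI: "(w j has_integral I j n) {0..real n}" for j
      unfolding I_def by (intro integrable_integral integrable_continuous_interval cw)
    have h1: "(?g has_integral ((\<Sum>j\<in>UNIV. A $ i $ j * I j n) - s * I i n)) {0..real n}"
      by (intro has_integral_diff has_integral_sum has_integral_mult_right hI) auto
    have h2: "(?g has_integral (?F (real n) - ?F 0)) {0..real n}"
    proof (rule fundamental_theorem_of_calculus)
      show "0 \<le> real n" by simp
      fix t assume "t \<in> {0..real n}"
      have "(?F has_real_derivative (- s * exp (- s * t) * ?y i t + exp (- s * t) * (A *v (mat_exp (t *\<^sub>R A) *v v)) $ i)) (at t)"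
        by (auto intro!: derivative_eq_intros deriv_y)
      moreover have "- s * exp (- s * t) * ?y i t + exp (- s * t) * (A *v (mat_exp (t *\<^sub>R A) *v v)) $ i = ?g t"
        by (simp add: w_def matrix_vector_mult_def sum_distrib_left sum_distrib_right algebra_simps sum_negf)
      ultimately show "(?F has_vector_derivative ?g t) (at t within {0..real n})"
        by (simp add: has_real_derivative_iff_has_vector_derivative[symmetric] has_field_derivative_at_within)
    qed
    have "(\<Sum>j\<in>UNIV. A $ i $ j * I j n) - s * I i n = ?F (real n) - ?F 0"
      using has_integral_unique[OF h1 h2] .
    then show ?thesis by (simp add: y_zero y_zero')
  qed
  have lim0: "(\<lambda>n. exp (- s * real n) * (mat_exp (real n *\<^sub>R A) *v v) $ i) \<longlonglongrightarrow> 0" for i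
  proof (rule Lim_null_comparison)
    show "eventually (\<lambda>n. norm (exp (- s * real n) * (mat_exp (real n *\<^sub>R A) *v v) $ i) \<le> C * exp (- ((s - K) * real n))) sequentially"
    proof (intro always_eventually allI)
      fix n :: nat
      have "\<bar>w i (real n)\<bar> \<le> C * exp (- (s - K) * real n)" by (rule wb) simp
      moreover have "- (s - K) * real n = - ((s - K) * real n)" by (simp only: minus_mult_left)
      ultimately show "norm (exp (- s * real n) * (mat_exp (real n *\<^sub>R A) *v v) $ i) \<le> C * exp (- ((s - K) * real n))"
        by (simp only: w_def real_norm_def mult.commute)
    qed
    show "(\<lambda>n. C * exp (- ((s - K) * real n))) \<longlonglongrightarrow> 0"
      using tendsto_mult_right_zero[OF exp_neg_lim[OF sK], of C] by simp
  qed
  have comp: "(\<Sum>j\<in>UNIV. A $ i $ j * Z j) - s * Z i = - v $ i" for i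
  proof -
    have "(\<lambda>n. (\<Sum>j\<in>UNIV. A $ i $ j * I j n) - s * I i n) \<longlonglongrightarrow> (\<Sum>j\<in>UNIV. A $ i $ j * Z j) - s * Z i"
      by (intro tendsto_intros IZ)
    moreover have "(\<lambda>n. (\<Sum>j\<in>UNIV. A $ i $ j * I j n) - s * I i n) \<longlonglongrightarrow> 0 - v $ i"
      unfolding key by (intro tendsto_intros lim0)
    ultimately show ?thesis using LIMSEQ_unique by fastforce
  qed
  show "s *s (\<chi> i. integral {0..} (w i)) - A *v (\<chi> i. integral {0..} (w i)) = v"
    using comp by (simp add: vec_eq_iff Z_def matrix_vector_mult_def algebra_simps)
qed

lemma poly_cpoly_sum:
  fixes p :: "real poly"
  assumes "degree p < N"
  shows "poly (map_poly (of_real :: real \<Rightarrow> complex) p) s = (\<Sum>i<N. of_real (coeff p i) * s^i)"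
proof -
  have deg: "degree (map_poly (of_real :: real \<Rightarrow> complex) p) = degree p"
    by (rule degree_map_poly) simp
  have "poly (map_poly (of_real :: real \<Rightarrow> complex) p) s = (\<Sum>i\<le>degree p. of_real (coeff p i) * s^i)"
    by (simp add: poly_altdef deg coeff_map_poly)
  also have "\<dots> = (\<Sum>i<N. of_real (coeff p i) * s^i)"
  proof (rule sum.mono_neutral_left)
    show "finite {..<N}" by simp
    show "{..degree p} \<subseteq> {..<N}" using assms by auto
    show "\<forall>i\<in>{..<N} - {..degree p}. of_real (coeff p i) * s ^ i = 0"
      by (auto simp: coeff_eq_0)
  qed
  finally show ?thesis .
qed

lemma matrix_inv_props:
  assumes "invertible (M :: 'a::semiring_1^'n^'n)"
  shows "M ** matrix_inv M = mat 1"
  using assms unfolding invertible_def matrix_inv_def by (rule someI_ex[THEN conjunct1])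

theorem lemma7:
  fixes h :: "real \<Rightarrow> real" and p q :: "real poly"
    and m_ty :: "'m::{finite,wellorder} itself"
  assumes cont: "continuous_on {0..} h"
    and bibo: "h absolutely_integrable_on {0..}"
    and coprime: "coprime p q"
    and strictly_proper: "degree p < degree q"
    and order: "CARD('m::{finite,wellorder}) = degree q"
    and laplace: "\<And>s. Re s > 0 \<Longrightarrow>
        ((\<lambda>t. complex_of_real (h t) * exp (- s * complex_of_real t)) has_integral ratfun p q s) {0..}"
    and dc_gain: "ratfun p q 0 = 1" "integral {0..} h = 1"
  shows "\<exists>P :: real^'m::{finite,wellorder}^'m::{finite,wellorder}.
           hurwitz P \<and>
           (let eta = - (P *v ones); alpha = (first_unit :: real^'m::{finite,wellorder}) in
             (\<forall>s. poly (map_poly complex_of_real q) s \<noteq> 0 \<and> det (mat s - cmat P) \<noteq> 0 \<longrightarrow>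
                  ratfun p q s = (\<Sum>i\<in>UNIV. cvec alpha $ i * (matrix_inv (mat s - cmat P) *v cvec eta) $ i)) \<and>
             (\<forall>t\<ge>0. h t = alpha \<bullet> (mat_exp (t *\<^sub>R P) *v eta)) \<and>
             (\<forall>t\<ge>0. integral {0..t} h = 1 - alpha \<bullet> (mat_exp (t *\<^sub>R P) *v ones)))"
proof -
  define m where "m = CARD('m)"
  have qnz: "q \<noteq> 0" using strictly_proper by auto
  define lc where "lc = lead_coeff q"
  have lc: "lc \<noteq> 0" using qnz by (simp add: lc_def)
  define a where "a k = coeff q k / lc" for k
  define b where "b k = coeff p k / lc" for k
  have a_m: "a m = 1" using lc by (simp add: a_def m_def order lc_def)
  have b_m: "b m = 0" using strictly_proper by (simp add: b_def m_def order coeff_eq_0)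
  have ab0: "a 0 = b 0"
  proof -
    have "poly (map_poly (of_real :: real \<Rightarrow> complex) p) 0 / poly (map_poly of_real q) 0 = 1"
      using dc_gain(1) by (simp add: ratfun_def)
    then have "complex_of_real (coeff p 0) / complex_of_real (coeff q 0) = 1"
      by (simp add: poly_0_coeff_0 coeff_map_poly)
    then have "coeff p 0 = coeff q 0"
      by (metis div_0 divide_eq_1_iff of_real_eq_iff zero_neq_one)
    then show ?thesis by (simp add: a_def b_def)
  qed
  obtain en :: "nat \<Rightarrow> 'm::{finite,wellorder}" where en: "bij_betw en {..<CARD('m)} UNIV" "en (CARD('m) - 1) = (LEAST i. True)"
    using exists_enum by blast
  interpret R: realiz en a b
    by unfold_locales (use en a_m b_m ab0 in \<open>simp_all add: m_def\<close>)
  define Qc where "Qc s = s^m + (\<Sum>k<m. of_real (a k) * s^k)" for s :: complex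
  define Bc where "Bc s = (\<Sum>k<m. of_real (b k) * s^k)" for s :: complex
  have polyQ: "poly (map_poly of_real q) s = of_real lc * Qc s" for s
  proof -
    have "poly (map_poly of_real q) s = (\<Sum>i<Suc m. of_real (coeff q i) * s^i)"
      by (rule poly_cpoly_sum) (simp add: m_def order)
    also have "\<dots> = of_real lc * Qc s"
      using lc by (simp add: Qc_def a_def m_def order lc_def sum_distrib_left algebra_simps)
    finally show ?thesis .
  qed
  have polyP: "poly (map_poly of_real p) s = of_real lc * Bc s" for s
  proof -
    have "poly (map_poly of_real p) s = (\<Sum>i<m. of_real (coeff p i) * s^i)"
      by (rule poly_cpoly_sum) (simp add: m_def order strictly_proper)
    also have "\<dots> = of_real lc * Bc s"
      using lc by (simp add: Bc_def b_def sum_distrib_left algebra_simps)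
    finally show ?thesis .
  qed
  have ratfun_eq: "ratfun p q s = Bc s / Qc s" for s
    using lc by (simp add: ratfun_def polyQ polyP)
  have Qroot: "poly (map_poly of_real q) s = 0 \<longleftrightarrow> Qc s = 0" for s
    using lc by (simp add: polyQ)
  have lhp: "Re l < 0" if "Qc l = 0" for l
    using roots_lhp[OF bibo laplace coprime qnz] that Qroot by blast
  define P where "P = R.Pm"
  define i0 :: "'m::{finite,wellorder}" where "i0 = (LEAST i. True)"
  have alpha: "(first_unit :: real^'m::{finite,wellorder}) = axis i0 1" by (simp add: first_unit_def i0_def)
  have eta: "- (P *v ones) = R.etav" by (simp add: P_def R.etav_def)
  have hur: "hurwitz P"
    unfolding hurwitz_def is_eigenvalue_def
  proof (intro allI impI)
    fix l assume "\<exists>v. v \<noteq> 0 \<and> cmat P *v v = l *s v"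
    then obtain v where "v \<noteq> 0" "cmat R.Pm *v v = l *s v" by (auto simp: P_def)
    then have "Qc l = 0" using R.C2 by (simp add: Qc_def m_def)
    then show "Re l < 0" by (rule lhp)
  qed
  have C1': "x $ i0 = ratfun p q s" if "(mat s - cmat P) *v x = cvec R.etav" "Qc s \<noteq> 0" for s x
  proof -
    have "x $ i0 * Qc s = Bc s" using R.C1[of s x] that by (simp add: Qc_def Bc_def m_def P_def i0_def)
    then show ?thesis using that(2) by (simp add: ratfun_eq field_simps)
  qed
  have part1: "\<forall>s. poly (map_poly complex_of_real q) s \<noteq> 0 \<and> det (mat s - cmat P) \<noteq> 0 \<longrightarrow>
                  ratfun p q s = (\<Sum>i\<in>UNIV. cvec (axis i0 1 :: real^'m::{finite,wellorder}) $ i * (matrix_inv (mat s - cmat P) *v cvec R.etav) $ i)"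
  proof (intro allI impI)
    fix s assume as: "poly (map_poly complex_of_real q) s \<noteq> 0 \<and> det (mat s - cmat P) \<noteq> 0"
    define M where "M = mat s - cmat P"
    define x where "x = matrix_inv M *v cvec R.etav"
    have "M ** matrix_inv M = mat 1"
      by (rule matrix_inv_props) (use as in \<open>simp add: invertible_det_nz M_def\<close>)
    then have "M *v x = cvec R.etav"
      by (simp add: x_def matrix_vector_mul_assoc)
    then have "x $ i0 = ratfun p q s" using C1' as Qroot by (simp add: M_def)
    moreover have "(\<Sum>i\<in>UNIV. cvec (axis i0 1 :: real^'m::{finite,wellorder}) $ i * x $ i) = x $ i0"
      by (simp add: axis_def ifz_mult of_real_ifz)
    ultimately show "ratfun p q s = (\<Sum>i\<in>UNIV. cvec (axis i0 1 :: real^'m::{finite,wellorder}) $ i * (matrix_inv (mat s - cmat P) *v cvec R.etav) $ i)"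
      by (simp add: x_def M_def)
  qed
  define g where "g t = (mat_exp (t *\<^sub>R P) *v R.etav) $ i0" for t
  have alpha_g: "axis i0 1 \<bullet> (mat_exp (t *\<^sub>R P) *v v) = (mat_exp (t *\<^sub>R P) *v v) $ i0" for t v
    by (simp add: inner_axis')
  define s0 where "s0 = mnorm P + 1"
  have s0: "s0 > mnorm P" "s0 > 0" using mnorm_ge0[of P] by (auto simp: s0_def)
  have hg: "h t = g t" if t: "t \<ge> 0" for t
  proof -
    have "h t - g t = 0"
    proof (rule lerch[where f = "\<lambda>t. h t - g t" and sz = s0, OF _ _ _ t])
      show "continuous_on {0..} (\<lambda>t. h t - g t)"
        unfolding g_def by (intro continuous_intros cont cont_y)
      have ai_h: "(\<lambda>t. h t * exp (- s * t)) absolutely_integrable_on {0..}" if "s > 0" for s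
      proof -
        have "(\<lambda>t. exp (- s * t) * h t) absolutely_integrable_on {0..}"
          by (rule abs_int_mult_bdd[OF bibo, where B = 1]) (use that in \<open>auto intro!: continuous_intros\<close>)
        then show ?thesis by (simp add: mult.commute)
      qed
      have ai_g: "(\<lambda>t. g t * exp (- s * t)) absolutely_integrable_on {0..}" if "s > mnorm P" for s
        using laplace_y(1)[OF that, of R.etav i0] by (simp add: g_def)
      show "(\<lambda>t. (h t - g t) * exp (- s0 * t)) absolutely_integrable_on {0..}"
        using set_integral_diff(1)[OF ai_h[OF s0(2)] ai_g[OF s0(1)]] by (simp add: left_diff_distrib)
      fix k :: nat
      define s where "s = s0 + real k"
      have s: "s > mnorm P" "s > 0" using s0 by (auto simp: s_def)
      have Qs: "Qc (of_real s) \<noteq> 0" using lhp[of "of_real s"] s by auto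
      have int_h: "((\<lambda>t. h t * exp (- s * t)) has_integral Re (ratfun p q (of_real s))) {0..}"
      proof -
        have "((\<lambda>t. complex_of_real (h t) * exp (- of_real s * complex_of_real t)) has_integral ratfun p q (of_real s)) {0..}"
          using laplace[of "of_real s"] s by simp
        from has_integral_linear[OF this bounded_linear_Re]
        show ?thesis by (simp add: o_def exp_of_real flip: of_real_mult of_real_minus)
      qed
      define w where "w i t = (mat_exp (t *\<^sub>R P) *v R.etav) $ i * exp (- s * t)" for i t
      define Z where "Z = (\<chi> i. integral {0..} (w i))"
      have Zeq: "s *s Z - P *v Z = R.etav"
        using laplace_y(2)[OF s(1), of R.etav] by (simp add: Z_def w_def[abs_def])
      have "(mat (of_real s) - cmat P) *v cvec Z = cvec R.etav"
      proof -
        have "(mat (of_real s) - cmat P) *v cvec Z = cvec (s *s Z - P *v Z)"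
          by (simp add: mat_diff_mv mat_mv cmat_mv vec_eq_iff)
        then show ?thesis using Zeq by simp
      qed
      then have "cvec Z $ i0 = ratfun p q (of_real s)" using C1' Qs by blast
      then have Zi0: "Z $ i0 = Re (ratfun p q (of_real s))" by (metis Re_complex_of_real cvec_nth)
      have int_g: "((\<lambda>t. g t * exp (- s * t)) has_integral Re (ratfun p q (of_real s))) {0..}"
      proof -
        have "w i0 absolutely_integrable_on {0..}"
          using laplace_y(1)[OF s(1), of R.etav i0] by (simp add: w_def[abs_def])
        then have "(w i0 has_integral integral {0..} (w i0)) {0..}"
          by (intro integrable_integral) (simp add: absolutely_integrable_on_def)
        then show ?thesis using Zi0 by (simp add: Z_def w_def[abs_def] g_def)
      qed
      show "((\<lambda>t. (h t - g t) * exp (- (s0 + real k) * t)) has_integral 0) {0..}"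
        using has_integral_diff[OF int_h int_g] by (simp add: s_def left_diff_distrib)
    qed
    then show ?thesis by simp
  qed
  have part3: "integral {0..t} h = 1 - (mat_exp (t *\<^sub>R P) *v ones) $ i0" if t: "t \<ge> 0" for t
  proof -
    have "integral {0..t} h = integral {0..t} g"
      by (rule integral_cong) (use hg in auto)
    also have "\<dots> = 1 - (mat_exp (t *\<^sub>R P) *v ones) $ i0"
    proof -
      let ?G = "\<lambda>\<tau>. - (mat_exp (\<tau> *\<^sub>R P) *v ones) $ i0"
      have "(g has_integral (?G t - ?G 0)) {0..t}"
      proof (rule fundamental_theorem_of_calculus[OF t])
        fix \<tau> assume "\<tau> \<in> {0..t}"
        have "(?G has_real_derivative - (P *v (mat_exp (\<tau> *\<^sub>R P) *v ones)) $ i0) (at \<tau>)"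
          by (intro derivative_intros deriv_y)
        moreover have "- (P *v (mat_exp (\<tau> *\<^sub>R P) *v ones)) $ i0 = g \<tau>"
        proof -
          have "P *v (mat_exp (\<tau> *\<^sub>R P) *v ones) = mat_exp (\<tau> *\<^sub>R P) *v (P *v ones)"
            by (simp add: matrix_vector_mul_assoc mexp_comm)
          then show ?thesis by (simp add: g_def eta[symmetric] mv_minus)
        qed
        ultimately show "(?G has_vector_derivative g \<tau>) (at \<tau> within {0..t})"
          by (simp add: has_real_derivative_iff_has_vector_derivative[symmetric] has_field_derivative_at_within)
      qed
      then show ?thesis by (simp add: integral_unique y_zero')
    qed
    finally show ?thesis .
  qed
  show ?thesis
  proof (intro exI[of _ P] conjI)
    show "hurwitz P" by (rule hur)
    show "let eta = - (P *v ones); alpha = (first_unit :: real^'m::{finite,wellorder}) in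
             (\<forall>s. poly (map_poly complex_of_real q) s \<noteq> 0 \<and> det (mat s - cmat P) \<noteq> 0 \<longrightarrow>
                  ratfun p q s = (\<Sum>i\<in>UNIV. cvec alpha $ i * (matrix_inv (mat s - cmat P) *v cvec eta) $ i)) \<and>
             (\<forall>t\<ge>0. h t = alpha \<bullet> (mat_exp (t *\<^sub>R P) *v eta)) \<and>
             (\<forall>t\<ge>0. integral {0..t} h = 1 - alpha \<bullet> (mat_exp (t *\<^sub>R P) *v ones))"
      unfolding Let_def eta alpha alpha_g
      using part1 hg part3 by (simp add: g_def)
  qed
qed

end
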